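(* Let $\tau$ be a primitive, aperiodic substitution and let $g_1,g_2$ be generators for $\tau$. Then $g_1^*\sim_r g_2^*$ holds if and only if there exist generators $g_1'\sim_G g_1$ and $g_2'\sim_G g_2$ whose right wings are identical.
   Context: Let $\mathcal{A}$ be a finite nonempty alphabet, $\mathcal{A}^*$ the finite words over $\mathcal{A}$ (including the empty word), $\mathcal{A}^+$ the nonempty words, $|u|$ the length of $u$. A word $u$ is a factor of $v$ if $v=w_1uw_2$ for some words $w_1,w_2$. A substitution is a map $\tau:\mathcal{A}\to\mathcal{A}^+$ extended to a concatenation-respecting map on words and letterwise to sequences. For $x\in\mathcal{A}^{\mathbb{Z}}$, $x_{[i]}$ denotes the letter at index $i$ and $x_{[i,j]}$ the word $x_{[i]}\cdots x_{[j]}$. The language $\mathcal{L}(\tau)$ is the set of words that are factors of $\tau^n(a)$ for some letter $a$ and some $n\ge1$; $X_\tau=\{x\in\mathcal{A}^{\mathbb{Z}}: x_{[i,j]}\in\mathcal{L}(\tau)\ \forall i\le j\}$. $\tau$ is primitive if there is $n\ge1$ such that every letter $b$ is a factor of $\tau^n(a)$ for every letter $a$, and there is a letter $a$ such that for every $N$ there is $n$ with $|\tau^n(a)|>N$; a primitive $\tau$ is aperiodic if $X_\tau$ is infinite. A generator for $\tau$ is a triple $(v,u,w)$ with $v,u,w\in\mathcal{A}^+$, $u\in\mathcal{L}(\tau)$ and $\tau(u)=vuw$; $v$, $u$, $w$ are its left wing, center and right wing, and its length is $|u|$. Its completion $(v,u,w)^*\in X_\tau$ is the two-sided sequence $\cdots\tau^2(v)\tau(v)vu.w\tau(w)\tau^2(w)\cdots$,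 i.e. the left-infinite word $\cdots\tau^2(v)\tau(v)vu$ occupies the negative indices, ending at index $-1$, and the right-infinite word $w\tau(w)\tau^2(w)\cdots$ occupies the indices $\ge0$, starting at index $0$. If $(v,u,cw)$ is a generator with $c\in\mathcal{A}$, $w\in\mathcal{A}^*$, its right extension is the generator $(v,uc,w\tau(c))$; if $(vc,u,w)$ is a generator with $c\in\mathcal{A}$, $v\in\mathcal{A}^*$, its left extension is the generator $(\tau(c)v,cu,w)$. Two generators $g_1,g_2$ are G related ($g_1\sim_G g_2$) if there is a generator $g_3$ obtainable from $g_1$ and also from $g_2$ by finite (possibly empty) sequences of left and right extensions. For $x,y\in X_\tau$, $x\sim_r y$ (right tail equivalence) means there are $m,M\in\mathbb{Z}$ with $x_{[i]}=y_{[i+m]}$ for all $i\ge M$. *)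

theory Defs
  imports Main
begin

definition subst_word :: "('a \<Rightarrow> 'a list) \<Rightarrow> 'a list \<Rightarrow> 'a list" where
  "subst_word \<tau> u = concat (map \<tau> u)"

definition factor :: "'a list \<Rightarrow> 'a list \<Rightarrow> bool" where
  "factor u v \<longleftrightarrow> (\<exists>w1 w2. v = w1 @ u @ w2)"

definition lang :: "('a \<Rightarrow> 'a list) \<Rightarrow> 'a list set" where
  "lang \<tau> = {u. \<exists>a n. n \<ge> 1 \<and> factor u ((subst_word \<tau> ^^ n) [a])}"

definition window :: "(int \<Rightarrow> 'a) \<Rightarrow> int \<Rightarrow> int \<Rightarrow> 'a list" where
  "window x i j = map (\<lambda>k. x (i + int k)) [0..<nat (j - i + 1)]"

definition shift_space :: "('a \<Rightarrow> 'a list) \<Rightarrow> (int \<Rightarrow> 'a) set" where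
  "shift_space \<tau> = {x. \<forall>i j. i \<le> j \<longrightarrow> window x i j \<in> lang \<tau>}"

definition primitive :: "('a \<Rightarrow> 'a list) \<Rightarrow> bool" where
  "primitive \<tau> \<longleftrightarrow> (\<forall>a. \<tau> a \<noteq> []) \<and>
     (\<exists>n\<ge>1. \<forall>a b. factor [b] ((subst_word \<tau> ^^ n) [a])) \<and>
     (\<exists>a. \<forall>N. \<exists>n. length ((subst_word \<tau> ^^ n) [a]) > N)"

definition aperiodic :: "('a \<Rightarrow> 'a list) \<Rightarrow> bool" where
  "aperiodic \<tau> \<longleftrightarrow> primitive \<tau> \<and> infinite (shift_space \<tau>)"

type_synonym 'a gen = "'a list \<times> 'a list \<times> 'a list"

definition generator :: "('a \<Rightarrow> 'a list) \<Rightarrow> 'a gen \<Rightarrow> bool" where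
  "generator \<tau> g \<longleftrightarrow> (case g of (v, u, w) \<Rightarrow>
     v \<noteq> [] \<and> u \<noteq> [] \<and> w \<noteq> [] \<and> u \<in> lang \<tau> \<and> subst_word \<tau> u = v @ u @ w)"

definition right_wing :: "'a gen \<Rightarrow> 'a list" where
  "right_wing g = snd (snd g)"

text \<open>Completion: indices >= 0 carry w tau(w) tau^2(w) ...; indices < 0 carry
... tau^2(v) tau(v) v u, ending at index -1.\<close>

definition right_seq :: "('a \<Rightarrow> 'a list) \<Rightarrow> 'a list \<Rightarrow> nat \<Rightarrow> 'a" where
  "right_seq \<tau> w i = concat (map (\<lambda>k. (subst_word \<tau> ^^ k) w) [0..<Suc i]) ! i"

definition left_seq :: "('a \<Rightarrow> 'a list) \<Rightarrow> 'a list \<Rightarrow> 'a list \<Rightarrow> nat \<Rightarrow> 'a" where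
  "left_seq \<tau> v u i =
     rev (concat (map (\<lambda>k. (subst_word \<tau> ^^ k) v) (rev [0..<i])) @ u) ! (i - 1)"
  \<comment> \<open>letter at index -i, for i >= 1\<close>

definition completion :: "('a \<Rightarrow> 'a list) \<Rightarrow> 'a gen \<Rightarrow> (int \<Rightarrow> 'a)" where
  "completion \<tau> g = (case g of (v, u, w) \<Rightarrow>
     (\<lambda>i. if 0 \<le> i then right_seq \<tau> w (nat i) else left_seq \<tau> v u (nat (- i))))"

definition right_ext :: "('a \<Rightarrow> 'a list) \<Rightarrow> 'a gen \<Rightarrow> 'a gen \<Rightarrow> bool" where
  "right_ext \<tau> g g' \<longleftrightarrow> generator \<tau> g \<and>
     (\<exists>v u c w. g = (v, u, c # w) \<and> g' = (v, u @ [c], w @ \<tau> c))"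

definition left_ext :: "('a \<Rightarrow> 'a list) \<Rightarrow> 'a gen \<Rightarrow> 'a gen \<Rightarrow> bool" where
  "left_ext \<tau> g g' \<longleftrightarrow> generator \<tau> g \<and>
     (\<exists>v u c w. g = (v @ [c], u, w) \<and> g' = (\<tau> c @ v, c # u, w))"

definition ext_step :: "('a \<Rightarrow> 'a list) \<Rightarrow> 'a gen \<Rightarrow> 'a gen \<Rightarrow> bool" where
  "ext_step \<tau> g g' \<longleftrightarrow> left_ext \<tau> g g' \<or> right_ext \<tau> g g'"

definition G_related :: "('a \<Rightarrow> 'a list) \<Rightarrow> 'a gen \<Rightarrow> 'a gen \<Rightarrow> bool" where
  "G_related \<tau> g1 g2 \<longleftrightarrow> generator \<tau> g1 \<and> generator \<tau> g2 \<and>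
     (\<exists>g3. (ext_step \<tau>)\<^sup>*\<^sup>* g1 g3 \<and> (ext_step \<tau>)\<^sup>*\<^sup>* g2 g3)"

definition right_tail_equiv :: "(int \<Rightarrow> 'a) \<Rightarrow> (int \<Rightarrow> 'a) \<Rightarrow> bool" where
  "right_tail_equiv x y \<longleftrightarrow> (\<exists>m M. \<forall>i\<ge>M. x i = y (i + m))"

end

theory Submission
  imports Defs
begin

definition Pw :: "('a \<Rightarrow> 'a list) \<Rightarrow> 'a list \<Rightarrow> nat \<Rightarrow> 'a list" where
  "Pw \<tau> w n = concat (map (\<lambda>k. (subst_word \<tau> ^^ k) w) [0..<n])"

lemma rs_def': "right_seq \<tau> w i = Pw \<tau> w (Suc i) ! i"
  by (simp add: right_seq_def Pw_def)

lemma sw_Nil[simp]: "subst_word \<tau> [] = []" by (simp add: subst_word_def)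
lemma sw_Cons[simp]: "subst_word \<tau> (a # xs) = \<tau> a @ subst_word \<tau> xs" by (simp add: subst_word_def)
lemma sw_append[simp]: "subst_word \<tau> (xs @ ys) = subst_word \<tau> xs @ subst_word \<tau> ys"
  by (simp add: subst_word_def)

lemma swpow_append: "(subst_word \<tau> ^^ k) (xs @ ys) = (subst_word \<tau> ^^ k) xs @ (subst_word \<tau> ^^ k) ys"
  by (induction k) auto

lemma sw_len: "\<forall>a. \<tau> a \<noteq> [] \<Longrightarrow> length xs \<le> length (subst_word \<tau> xs)"
proof (induction xs)
  case Nil then show ?case by simp
next
  case (Cons a xs)
  then have "length (\<tau> a) \<ge> 1" by (simp add: Suc_leI)
  with Cons show ?case by simp
qed

lemma swpow_len: "\<forall>a. \<tau> a \<noteq> [] \<Longrightarrow> length xs \<le> length ((subst_word \<tau> ^^ k) xs)"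
  by (induction k) (auto intro: le_trans sw_len)

lemma Pw_Suc: "Pw \<tau> w (Suc n) = Pw \<tau> w n @ (subst_word \<tau> ^^ n) w"
  by (simp add: Pw_def)

lemma Pw_Suc': "Pw \<tau> w (Suc n) = w @ subst_word \<tau> (Pw \<tau> w n)"
proof (induction n)
  case 0 then show ?case by (simp add: Pw_def)
next
  case (Suc n)
  have "Pw \<tau> w (Suc (Suc n)) = Pw \<tau> w (Suc n) @ (subst_word \<tau> ^^ Suc n) w" by (rule Pw_Suc)
  also have "\<dots> = w @ subst_word \<tau> (Pw \<tau> w n @ (subst_word \<tau> ^^ n) w)" using Suc by simp
  also have "\<dots> = w @ subst_word \<tau> (Pw \<tau> w (Suc n))" by (simp add: Pw_Suc)
  finally show ?case .
qed

lemma Pw_len: "\<forall>a. \<tau> a \<noteq> [] \<Longrightarrow> w \<noteq> [] \<Longrightarrow> n \<le> length (Pw \<tau> w n)"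
proof (induction n)
  case 0 then show ?case by simp
next
  case (Suc n)
  have "length w \<le> length ((subst_word \<tau> ^^ n) w)" using Suc.prems swpow_len by blast
  moreover have "length w \<ge> 1" using Suc.prems by (simp add: Suc_leI)
  ultimately show ?case using Suc by (simp add: Pw_Suc)
qed

lemma Pw_mono: "n \<le> n' \<Longrightarrow> \<exists>ys. Pw \<tau> w n' = Pw \<tau> w n @ ys"
proof (induction n' rule: dec_induct)
  case base then show ?case by simp
next
  case (step m) then show ?case by (auto simp: Pw_Suc)
qed

lemma rs_nth:
  assumes ne: "\<forall>a. \<tau> a \<noteq> []" and w: "w \<noteq> []" and i: "i < length (Pw \<tau> w n)"
  shows "right_seq \<tau> w i = Pw \<tau> w n ! i"
proof (cases "n \<le> Suc i")
  case True
  then obtain ys where "Pw \<tau> w (Suc i) = Pw \<tau> w n @ ys" using Pw_mono by blast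
  then show ?thesis using i by (simp add: rs_def' nth_append)
next
  case False
  then obtain ys where "Pw \<tau> w n = Pw \<tau> w (Suc i) @ ys" using Pw_mono[of "Suc i" n] by auto
  moreover have "Suc i \<le> length (Pw \<tau> w (Suc i))" using Pw_len ne w by blast
  ultimately show ?thesis by (simp add: rs_def' nth_append)
qed

lemma Pw_map:
  assumes ne: "\<forall>a. \<tau> a \<noteq> []" and w: "w \<noteq> []"
  shows "Pw \<tau> w n = map (right_seq \<tau> w) [0..<length (Pw \<tau> w n)]"
  by (rule nth_equalityI) (auto simp: rs_nth[OF ne w])

lemma Pw_shift: "c # Pw \<tau> (w @ \<tau> c) n = Pw \<tau> (c # w) n @ (subst_word \<tau> ^^ n) [c]"
proof (induction n)
  case 0 then show ?case by (simp add: Pw_def)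
next
  case (Suc n)
  have "Pw \<tau> (c # w) (Suc n) @ (subst_word \<tau> ^^ Suc n) [c]
      = (c # w) @ subst_word \<tau> (Pw \<tau> (c # w) n @ (subst_word \<tau> ^^ n) [c])"
    by (simp add: Pw_Suc')
  also have "\<dots> = (c # w) @ subst_word \<tau> (c # Pw \<tau> (w @ \<tau> c) n)" using Suc by simp
  also have "\<dots> = c # Pw \<tau> (w @ \<tau> c) (Suc n)" by (simp add: Pw_Suc')
  finally show ?case by simp
qed

lemma rs_shift:
  assumes ne: "\<forall>a. \<tau> a \<noteq> []"
  shows "right_seq \<tau> (c # w) (Suc i) = right_seq \<tau> (w @ \<tau> c) i"
proof -
  let ?n = "Suc (Suc i)"
  have w2: "w @ \<tau> c \<noteq> []" using ne by simp
  have l1: "Suc i < length (Pw \<tau> (c # w) ?n)" using Pw_len[OF ne, of "c # w" ?n] by simp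
  have l2: "i < length (Pw \<tau> (w @ \<tau> c) ?n)" using Pw_len[OF ne w2, of ?n] by simp
  have "right_seq \<tau> (c # w) (Suc i) = Pw \<tau> (c # w) ?n ! Suc i" using rs_nth[OF ne _ l1] by simp
  also have "\<dots> = (Pw \<tau> (c # w) ?n @ (subst_word \<tau> ^^ ?n) [c]) ! Suc i" using l1 by (simp add: nth_append)
  also have "\<dots> = (c # Pw \<tau> (w @ \<tau> c) ?n) ! Suc i" by (simp only: Pw_shift)
  also have "\<dots> = right_seq \<tau> (w @ \<tau> c) i" using rs_nth[OF ne w2 l2] by simp
  finally show ?thesis .
qed

lemma comp_nonneg: "0 \<le> i \<Longrightarrow> completion \<tau> g i = right_seq \<tau> (right_wing g) (nat i)"
  by (cases g) (simp add: completion_def right_wing_def)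

lemma rte_refl: "right_tail_equiv x x"
  unfolding right_tail_equiv_def by (rule exI[of _ 0]) auto

lemma rte_sym: "right_tail_equiv x y \<Longrightarrow> right_tail_equiv y x"
  unfolding right_tail_equiv_def
proof -
  assume "\<exists>m M. \<forall>i\<ge>M. x i = y (i + m)"
  then obtain m M where h: "\<forall>i\<ge>M. x i = y (i + m)" by blast
  have "\<forall>i\<ge>M + m. y i = x (i + - m)"
  proof (intro allI impI)
    fix i assume "i \<ge> M + m"
    then have "x (i - m) = y (i - m + m)" using h by simp
    then show "y i = x (i + - m)" by simp
  qed
  then show "\<exists>m M. \<forall>i\<ge>M. y i = x (i + m)" by blast
qed

lemma rte_trans: "right_tail_equiv x y \<Longrightarrow> right_tail_equiv y z \<Longrightarrow> right_tail_equiv x z"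
  unfolding right_tail_equiv_def
proof -
  assume "\<exists>m M. \<forall>i\<ge>M. x i = y (i + m)" "\<exists>m M. \<forall>i\<ge>M. y i = z (i + m)"
  then obtain m M m' M' where h: "\<forall>i\<ge>M. x i = y (i + m)" and h': "\<forall>i\<ge>M'. y i = z (i + m')" by blast
  have "\<forall>i\<ge>max M (M' - m). x i = z (i + (m + m'))"
  proof (intro allI impI)
    fix i assume "i \<ge> max M (M' - m)"
    then show "x i = z (i + (m + m'))" using h h'[rule_format, of "i + m"] by (simp add: add.assoc)
  qed
  then show "\<exists>m M. \<forall>i\<ge>M. x i = z (i + m)" by blast
qed

lemma rte_same_wing: "right_wing g = right_wing g' \<Longrightarrow>
    right_tail_equiv (completion \<tau> g) (completion \<tau> g')"
  unfolding right_tail_equiv_def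
  by (rule exI[of _ 0], rule exI[of _ 0]) (simp add: comp_nonneg)

lemma rte_step:
  assumes ne: "\<forall>a. \<tau> a \<noteq> []" and st: "ext_step \<tau> g g'"
  shows "right_tail_equiv (completion \<tau> g) (completion \<tau> g')"
  using st unfolding ext_step_def
proof
  assume "left_ext \<tau> g g'"
  then have "right_wing g = right_wing g'" by (auto simp: left_ext_def right_wing_def)
  then show ?thesis by (rule rte_same_wing)
next
  assume "right_ext \<tau> g g'"
  then obtain v u c w where g: "g = (v, u, c # w)" and g': "g' = (v, u @ [c], w @ \<tau> c)"
    by (auto simp: right_ext_def)
  have "\<forall>i\<ge>1. completion \<tau> g i = completion \<tau> g' (i + - 1)"
  proof (intro allI impI)
    fix i :: int assume i: "i \<ge> 1"
    then have "nat i = Suc (nat (i - 1))" by simp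
    then show "completion \<tau> g i = completion \<tau> g' (i + - 1)"
      using i by (simp add: comp_nonneg g g' right_wing_def rs_shift[OF ne])
  qed
  then show ?thesis unfolding right_tail_equiv_def by blast
qed

lemma rte_star:
  assumes ne: "\<forall>a. \<tau> a \<noteq> []"
  shows "(ext_step \<tau>)\<^sup>*\<^sup>* g g' \<Longrightarrow> right_tail_equiv (completion \<tau> g) (completion \<tau> g')"
proof (induction rule: rtranclp_induct)
  case base then show ?case by (rule rte_refl)
next
  case (step y z) then show ?case using rte_trans rte_step[OF ne] by blast
qed


lemma factor_trans: "factor s t \<Longrightarrow> factor t r \<Longrightarrow> factor s r"
proof -
  assume "factor s t" "factor t r"
  then obtain a b c d where "t = a @ s @ b" "r = c @ t @ d" unfolding factor_def by blast
  then have "r = (c @ a) @ s @ (b @ d)" by simp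
  then show ?thesis unfolding factor_def by blast
qed

lemma factor_sw: "factor s t \<Longrightarrow> factor (subst_word \<tau> s) (subst_word \<tau> t)"
proof -
  assume "factor s t"
  then obtain a b where "t = a @ s @ b" unfolding factor_def by blast
  then have "subst_word \<tau> t = subst_word \<tau> a @ subst_word \<tau> s @ subst_word \<tau> b" by simp
  then show ?thesis unfolding factor_def by blast
qed

lemma factor_swpow: "factor s t \<Longrightarrow> factor ((subst_word \<tau> ^^ k) s) ((subst_word \<tau> ^^ k) t)"
  by (induction k) (auto intro: factor_sw)

lemma lang_factor: "u \<in> lang \<tau> \<Longrightarrow> factor s u \<Longrightarrow> s \<in> lang \<tau>"
  unfolding lang_def using factor_trans by blast

lemma lang_sw: "u \<in> lang \<tau> \<Longrightarrow> subst_word \<tau> u \<in> lang \<tau>"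
proof -
  assume "u \<in> lang \<tau>"
  then obtain a n where n: "n \<ge> 1" "factor u ((subst_word \<tau> ^^ n) [a])" unfolding lang_def by blast
  then have "factor (subst_word \<tau> u) ((subst_word \<tau> ^^ Suc n) [a])" using factor_sw by fastforce
  moreover have "Suc n \<ge> 1" by simp
  ultimately show ?thesis unfolding lang_def by blast
qed

definition rext :: "('a \<Rightarrow> 'a list) \<Rightarrow> 'a gen \<Rightarrow> 'a gen" where
  "rext \<tau> g = (case g of (v, u, w) \<Rightarrow> (v, u @ [hd w], tl w @ \<tau> (hd w)))"

lemma rext_props:
  assumes ne: "\<forall>a. \<tau> a \<noteq> []" and gen: "generator \<tau> g"
  shows "generator \<tau> (rext \<tau> g) \<and> ext_step \<tau> g (rext \<tau> g) \<and>
    (\<forall>i. right_seq \<tau> (right_wing (rext \<tau> g)) i = right_seq \<tau> (right_wing g) (Suc i))"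
proof -
  obtain v u w where g: "g = (v, u, w)" by (cases g) auto
  from gen g obtain c w' where w: "w = c # w'" unfolding generator_def by (cases w) auto
  have r: "rext \<tau> g = (v, u @ [c], w' @ \<tau> c)" by (simp add: rext_def g w)
  have gg: "v \<noteq> []" "u \<in> lang \<tau>" "subst_word \<tau> u = v @ u @ c # w'"
    using gen unfolding generator_def g w by auto
  have "factor (u @ [c]) (subst_word \<tau> u)" unfolding factor_def using gg(3)
    by (rule_tac x=v in exI, rule_tac x=w' in exI) simp
  then have l: "u @ [c] \<in> lang \<tau>" using lang_factor lang_sw gg(2) by blast
  have G: "generator \<tau> (rext \<tau> g)" unfolding r generator_def using gg l ne by simp
  have E: "ext_step \<tau> g (rext \<tau> g)" unfolding ext_step_def right_ext_def using gen r g w by blast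
  show ?thesis using G E by (simp add: rext_def g w right_wing_def rs_shift[OF ne])
qed

lemma rextpow:
  assumes ne: "\<forall>a. \<tau> a \<noteq> []" and gen: "generator \<tau> g"
  shows "generator \<tau> ((rext \<tau> ^^ k) g) \<and> (ext_step \<tau>)\<^sup>*\<^sup>* g ((rext \<tau> ^^ k) g) \<and>
    (\<forall>i. right_seq \<tau> (right_wing ((rext \<tau> ^^ k) g)) i = right_seq \<tau> (right_wing g) (i + k))"
proof (induction k)
  case 0 then show ?case using gen by simp
next
  case (Suc k)
  then show ?case using rext_props[OF ne, of "(rext \<tau> ^^ k) g"]
    by (auto intro: rtranclp.rtrancl_into_rtrancl)
qed

lemma map_upt_split: "l1 \<le> l2 \<Longrightarrow> map f [0..<l2] = map f [0..<l1] @ map f [l1..<l2]"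
  by (metis map_append upt_add_eq_append le_iff_add zero_le)

lemma sw_prefix_nth:
  assumes "j < length (subst_word \<tau> (map R [0..<l1]))" "j < length (subst_word \<tau> (map R [0..<l2]))"
  shows "subst_word \<tau> (map R [0..<l1]) ! j = subst_word \<tau> (map R [0..<l2]) ! j"
proof (cases "l1 \<le> l2")
  case True
  then show ?thesis using assms by (simp add: map_upt_split[OF True] nth_append)
next
  case False
  then have F: "l2 \<le> l1" by simp
  then show ?thesis using assms by (simp add: map_upt_split[OF F] nth_append)
qed

lemma sw_prefix_nth2:
  assumes "xs = map R [0..<length xs]" "ys = map R [0..<length ys]"
    "j < length (subst_word \<tau> xs)" "j < length (subst_word \<tau> ys)"
  shows "subst_word \<tau> xs ! j = subst_word \<tau> ys ! j"
proof -
  define l1 where "l1 = length xs"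
  define l2 where "l2 = length ys"
  have x: "xs = map R [0..<l1]" using assms(1) unfolding l1_def .
  have y: "ys = map R [0..<l2]" using assms(2) unfolding l2_def .
  show ?thesis using sw_prefix_nth[of j \<tau> R l1 l2] assms(3,4) unfolding x y by blast
qed

lemma periodic_finite:
  fixes \<tau> :: "'a::finite \<Rightarrow> 'a list"
  assumes prim: "primitive \<tau>" and w1: "w1 \<noteq> []" and z: "z \<noteq> []"
    and eq: "right_seq \<tau> w1 = right_seq \<tau> (w1 @ z)"
  shows "finite (shift_space \<tau>)"
proof -
  have ne: "\<forall>a. \<tau> a \<noteq> []" using prim by (simp add: primitive_def)
  define R where "R = right_seq \<tau> w1"
  define K where "K = length w1"
  define q where "q = length z"
  have w12: "w1 @ z \<noteq> []" using w1 by simp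
  have perA: "R (K + j) = R (K + q + j)" for j
  proof -
    let ?n = "Suc j"
    have a1: "j < length (subst_word \<tau> (Pw \<tau> w1 ?n))"
      using Pw_len[OF ne w1, of ?n] sw_len[OF ne, of "Pw \<tau> w1 ?n"] by simp
    have a2: "j < length (subst_word \<tau> (Pw \<tau> (w1 @ z) ?n))"
      using Pw_len[OF ne w12, of ?n] sw_len[OF ne, of "Pw \<tau> (w1 @ z) ?n"] by simp
    have m1: "Pw \<tau> w1 ?n = map R [0..<length (Pw \<tau> w1 ?n)]"
      unfolding R_def by (rule Pw_map[OF ne w1])
    have m2: "Pw \<tau> (w1 @ z) ?n = map R [0..<length (Pw \<tau> (w1 @ z) ?n)]"
      unfolding R_def eq by (rule Pw_map[OF ne w12])
    have "R (K + j) = Pw \<tau> w1 (Suc ?n) ! (K + j)"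
      unfolding R_def K_def using a1 by (intro rs_nth[OF ne w1]) (simp add: Pw_Suc')
    also have "\<dots> = subst_word \<tau> (Pw \<tau> w1 ?n) ! j" by (simp add: Pw_Suc' nth_append K_def)
    also have "\<dots> = subst_word \<tau> (Pw \<tau> (w1 @ z) ?n) ! j"
      using sw_prefix_nth2[OF m1 m2 a1 a2] .
    also have "\<dots> = Pw \<tau> (w1 @ z) (Suc ?n) ! (K + q + j)"
      by (simp add: Pw_Suc' nth_append K_def q_def)
    also have "\<dots> = R (K + q + j)"
      unfolding R_def K_def q_def eq using a2
      by (intro rs_nth[OF ne w12, symmetric]) (simp add: Pw_Suc')
    finally show ?thesis .
  qed
  have per: "R (i + q) = R i" if "i \<ge> K" for i
    using perA[of "i - K"] that by (simp add: add.commute)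
  from prim obtain n0 where n0: "n0 \<ge> 1" "\<forall>a b. factor [b] ((subst_word \<tau> ^^ n0) [a])"
    unfolding primitive_def by blast
  obtain c w' where cw: "w1 = c # w'" using w1 by (cases w1) auto
  have occ: "\<exists>p\<ge>K. u = map R [p..<p + length u]" if u: "u \<in> lang \<tau>" for u
  proof -
    obtain a n where n: "n \<ge> 1" "factor u ((subst_word \<tau> ^^ n) [a])" using u unfolding lang_def by blast
    define N where "N = n + n0"
    have "factor ((subst_word \<tau> ^^ n) [a]) ((subst_word \<tau> ^^ n) ((subst_word \<tau> ^^ n0) [c]))"
      using n0(2) factor_swpow by blast
    then have f1: "factor ((subst_word \<tau> ^^ n) [a]) ((subst_word \<tau> ^^ N) [c])"
      by (simp add: N_def funpow_add)
    have f2: "factor ((subst_word \<tau> ^^ N) [c]) ((subst_word \<tau> ^^ N) w1)"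
    proof -
      have "(subst_word \<tau> ^^ N) w1 = [] @ (subst_word \<tau> ^^ N) [c] @ (subst_word \<tau> ^^ N) w'"
        using swpow_append[where \<tau>=\<tau> and k=N and xs="[c]" and ys=w'] cw by simp
      then show ?thesis unfolding factor_def by blast
    qed
    have "factor u ((subst_word \<tau> ^^ N) w1)" using n(2) f1 f2 factor_trans by blast
    then obtain s1 s2 where s: "(subst_word \<tau> ^^ N) w1 = s1 @ u @ s2" unfolding factor_def by blast
    have PN: "Pw \<tau> w1 (Suc N) = Pw \<tau> w1 N @ s1 @ u @ s2" by (simp add: Pw_Suc s)
    have N1: "N \<ge> 1" using n N_def by simp
    obtain N' where N': "N = Suc N'" using N1 not0_implies_Suc by fastforce
    have KP: "K \<le> length (Pw \<tau> w1 N)" by (simp add: N' Pw_Suc' K_def)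
    define p where "p = length (Pw \<tau> w1 N) + length s1"
    have mp: "Pw \<tau> w1 (Suc N) = map R [0..<length (Pw \<tau> w1 (Suc N))]"
      unfolding R_def by (rule Pw_map[OF ne w1])
    have "u = map R [p..<p + length u]"
    proof (rule nth_equalityI)
      show "length u = length (map R [p..<p + length u])" by simp
    next
      fix k assume k: "k < length u"
      have "u ! k = Pw \<tau> w1 (Suc N) ! (p + k)" using k by (simp add: PN p_def nth_append)
      also have "\<dots> = R (p + k)" using k by (subst mp) (simp add: PN p_def)
      finally show "u ! k = map R [p..<p + length u] ! k" using k by simp
    qed
    then show ?thesis using KP p_def by (intro exI[of _ p]) simp
  qed
  have xper: "x (i + int q) = x i" if x: "x \<in> shift_space \<tau>" for x i
  proof -
    have "window x i (i + int q) \<in> lang \<tau>" using x unfolding shift_space_def by simp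
    moreover have wd: "window x i (i + int q) = map (\<lambda>k. x (i + int k)) [0..<Suc q]"
    proof -
      have "nat (i + int q - i + 1) = Suc q" by simp
      then show ?thesis unfolding window_def by (simp only:)
    qed
    ultimately obtain p where p: "p \<ge> K" "map (\<lambda>k. x (i + int k)) [0..<Suc q] = map R [p..<p + Suc q]"
      using occ by fastforce
    have "x i = R p" using arg_cong[OF p(2), of "\<lambda>l. l ! 0"] by (simp del: upt_Suc)
    moreover have "x (i + int q) = R (p + q)"
      using arg_cong[OF p(2), of "\<lambda>l. l ! q"] by (simp del: upt_Suc)
    ultimately show ?thesis using per p(1) by simp
  qed
  have qpos: "q > 0" using z q_def by simp
  have xmod: "x i = x (i mod int q)" if x: "x \<in> shift_space \<tau>" for x i
  proof -
    have A: "x (j + int n * int q) = x j" for j n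
    proof (induction n)
      case 0 then show ?case by simp
    next
      case (Suc n)
      have "x (j + int (Suc n) * int q) = x ((j + int n * int q) + int q)" by (simp add: algebra_simps)
      also have "\<dots> = x (j + int n * int q)" using xper[OF x] by simp
      finally show ?case using Suc by simp
    qed
    define d where "d = i div int q"
    have i: "i = i mod int q + d * int q" by (simp add: d_def)
    show ?thesis
    proof (cases "d \<ge> 0")
      case True
      then have "x (i mod int q + int (nat d) * int q) = x (i mod int q)" using A by blast
      then show ?thesis using True i by simp
    next
      case False
      have "x (i + int (nat (- d)) * int q) = x i" using A by blast
      moreover have "i + int (nat (- d)) * int q = i mod int q" using False i by (simp add: algebra_simps)
      ultimately show ?thesis by simp
    qed
  qed
  define f where "f = (\<lambda>x::int \<Rightarrow> 'a. map (\<lambda>k. x (int k)) [0..<q])"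
  have inj: "inj_on f (shift_space \<tau>)"
  proof (rule inj_onI)
    fix x y assume x: "x \<in> shift_space \<tau>" and y: "y \<in> shift_space \<tau>" and fe: "f x = f y"
    show "x = y"
    proof
      fix i
      have m0: "0 \<le> i mod int q" "i mod int q < int q" using qpos by auto
      then have k: "nat (i mod int q) < q" by simp
      have "x (int (nat (i mod int q))) = y (int (nat (i mod int q)))"
        using arg_cong[OF fe, of "\<lambda>l. l ! nat (i mod int q)"] k by (simp add: f_def)
      then show "x i = y i" using xmod[OF x, of i] xmod[OF y, of i] m0 by simp
    qed
  qed
  have "f ` shift_space \<tau> \<subseteq> {xs. set xs \<subseteq> UNIV \<and> length xs = q}" by (auto simp: f_def)
  moreover have "finite {xs. set xs \<subseteq> (UNIV::'a set) \<and> length xs = q}"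
    by (rule finite_lists_length_eq) simp
  ultimately show ?thesis using inj inj_on_finite by blast
qed

lemma wing_eq_aux:
  fixes \<tau> :: "'a::finite \<Rightarrow> 'a list"
  assumes prim: "primitive \<tau>" and ap: "aperiodic \<tau>" and w1: "w1 \<noteq> []" and w2: "w2 \<noteq> []"
    and eq: "right_seq \<tau> w1 = right_seq \<tau> w2" and le: "length w1 \<le> length w2"
  shows "w1 = w2"
proof -
  have ne: "\<forall>a. \<tau> a \<noteq> []" using prim by (simp add: primitive_def)
  have P1: "Pw \<tau> w (Suc 0) = w" for w by (simp add: Pw_def)
  have nth: "right_seq \<tau> w i = w ! i" if "w \<noteq> []" "i < length w" for w i
    using rs_nth[OF ne that(1), of i "Suc 0"] that(2) by (simp add: P1)
  have "w1 = take (length w1) w2"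
  proof (rule nth_equalityI)
    show "length w1 = length (take (length w1) w2)" using le by simp
  next
    fix i assume i: "i < length w1"
    have "w1 ! i = right_seq \<tau> w1 i" using nth[OF w1 i] by simp
    also have "\<dots> = right_seq \<tau> w2 i" using eq by simp
    also have "\<dots> = w2 ! i" using nth[OF w2] i le by simp
    finally show "w1 ! i = take (length w1) w2 ! i" using i by simp
  qed
  then have w2e: "w2 = w1 @ drop (length w1) w2" by (metis append_take_drop_id)
  show ?thesis
  proof (rule ccontr)
    assume "w1 \<noteq> w2"
    then have "drop (length w1) w2 \<noteq> []" using w2e by auto
    then have "finite (shift_space \<tau>)" using periodic_finite[OF prim w1] eq w2e by metis
    then show False using ap by (simp add: aperiodic_def)
  qed
qed

lemma wing_eq:
  fixes \<tau> :: "'a::finite \<Rightarrow> 'a list"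
  assumes prim: "primitive \<tau>" and ap: "aperiodic \<tau>" and w1: "w1 \<noteq> []" and w2: "w2 \<noteq> []"
    and eq: "right_seq \<tau> w1 = right_seq \<tau> w2"
  shows "w1 = w2"
proof (cases "length w1 \<le> length w2")
  case True then show ?thesis using wing_eq_aux[OF prim ap w1 w2 eq] by blast
next
  case False then show ?thesis using wing_eq_aux[OF prim ap w2 w1 eq[symmetric]] by simp
qed

theorem mainTheorem6:
  fixes \<tau> :: "'a::finite \<Rightarrow> 'a list" and g1 g2 :: "'a gen"
  assumes "primitive \<tau>" and "aperiodic \<tau>"
    and "generator \<tau> g1" and "generator \<tau> g2"
  shows "right_tail_equiv (completion \<tau> g1) (completion \<tau> g2) \<longleftrightarrow>
    (\<exists>g1' g2'. generator \<tau> g1' \<and> generator \<tau> g2' \<and>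
        G_related \<tau> g1' g1 \<and> G_related \<tau> g2' g2 \<and> right_wing g1' = right_wing g2')"
proof
  have ne: "\<forall>a. \<tau> a \<noteq> []" using assms(1) by (simp add: primitive_def)
  {
    assume "right_tail_equiv (completion \<tau> g1) (completion \<tau> g2)"
    then obtain m M where h: "\<forall>i\<ge>M. completion \<tau> g1 i = completion \<tau> g2 (i + m)"
      unfolding right_tail_equiv_def by blast
    define a where "a = nat (max M (- m))"
    have a1: "int a \<ge> M" "int a + m \<ge> 0" unfolding a_def by auto
    define b where "b = nat (int a + m)"
    define g1' where "g1' = (rext \<tau> ^^ a) g1"
    define g2' where "g2' = (rext \<tau> ^^ b) g2"
    note r1 = rextpow[OF ne assms(3), of a, folded g1'_def]
    note r2 = rextpow[OF ne assms(4), of b, folded g2'_def]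
    note r1a = conjunct1[OF r1] and r1b = conjunct1[OF conjunct2[OF r1]] and r1c = conjunct2[OF conjunct2[OF r1]]
    note r2a = conjunct1[OF r2] and r2b = conjunct1[OF conjunct2[OF r2]] and r2c = conjunct2[OF conjunct2[OF r2]]
    have eqR: "right_seq \<tau> (right_wing g1') = right_seq \<tau> (right_wing g2')"
    proof
      fix i
      have "right_seq \<tau> (right_wing g1') i = right_seq \<tau> (right_wing g1) (i + a)" using r1c by (rule spec)
      also have "\<dots> = completion \<tau> g1 (int (i + a))" using comp_nonneg[of "int (i + a)" \<tau> g1] unfolding nat_int by simp
      also have "\<dots> = completion \<tau> g2 (int (i + a) + m)" using h a1 by simp
      also have "\<dots> = right_seq \<tau> (right_wing g2) (nat (int (i + a) + m))"
        using a1 by (simp add: comp_nonneg)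
      also have "nat (int (i + a) + m) = i + b" using a1 unfolding b_def by linarith
      also have "right_seq \<tau> (right_wing g2) (i + b) = right_seq \<tau> (right_wing g2') i" using r2c[rule_format, of i] by (rule sym)
      finally show "right_seq \<tau> (right_wing g1') i = right_seq \<tau> (right_wing g2') i" .
    qed
    have n1: "right_wing g1' \<noteq> []" using r1a by (cases g1') (simp add: generator_def right_wing_def)
    have n2: "right_wing g2' \<noteq> []" using r2a by (cases g2') (simp add: generator_def right_wing_def)
    have W: "right_wing g1' = right_wing g2'" using wing_eq[OF assms(1,2) n1 n2 eqR] .
    have G1: "G_related \<tau> g1' g1" unfolding G_related_def using r1a r1b assms(3) by blast
    have G2: "G_related \<tau> g2' g2" unfolding G_related_def using r2a r2b assms(4) by blast
    show "\<exists>g1' g2'. generator \<tau> g1' \<and> generator \<tau> g2' \<and>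
        G_related \<tau> g1' g1 \<and> G_related \<tau> g2' g2 \<and> right_wing g1' = right_wing g2'"
      using r1a r2a G1 G2 W by blast
  }
  {
    assume "\<exists>g1' g2'. generator \<tau> g1' \<and> generator \<tau> g2' \<and>
        G_related \<tau> g1' g1 \<and> G_related \<tau> g2' g2 \<and> right_wing g1' = right_wing g2'"
    then obtain g1' g2' where G1: "G_related \<tau> g1' g1" and G2: "G_related \<tau> g2' g2"
      and W: "right_wing g1' = right_wing g2'" by blast
    have rel: "right_tail_equiv (completion \<tau> g) (completion \<tau> g')" if Grel: "G_related \<tau> g' g" for g g'
    proof -
      have E: "\<exists>g3. (ext_step \<tau>)\<^sup>*\<^sup>* g' g3 \<and> (ext_step \<tau>)\<^sup>*\<^sup>* g g3"
        using conjunct2[OF conjunct2[OF Grel[unfolded G_related_def]]] .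
      then obtain g3 where S1: "(ext_step \<tau>)\<^sup>*\<^sup>* g' g3" and S2: "(ext_step \<tau>)\<^sup>*\<^sup>* g g3"
        by (elim exE conjE)
      have A: "right_tail_equiv (completion \<tau> g') (completion \<tau> g3)" by (rule rte_star[OF ne S1])
      have B: "right_tail_equiv (completion \<tau> g) (completion \<tau> g3)" by (rule rte_star[OF ne S2])
      show ?thesis by (rule rte_trans[OF B rte_sym[OF A]])
    qed
    show "right_tail_equiv (completion \<tau> g1) (completion \<tau> g2)"
    proof -
      have "right_tail_equiv (completion \<tau> g1) (completion \<tau> g2')"
        using rel[OF G1] rte_same_wing[OF W, of \<tau>] by (rule rte_trans)
      then show ?thesis using rte_sym[OF rel[OF G2]] by (rule rte_trans)
    qed
  }
qed

end
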